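(* Let $(K,\le)$ be a linearly ordered set which is compact in its order topology, and let $d:K\times K\to[0,+\infty)$ be a symmetric map with $d(x,y)>0$ whenever $x\neq y$, such that for every $x<y$ in $K$ with $]x,y[\neq\emptyset$ and every $\varepsilon>0$ there exist $u<v$ with $]u,v[$ a nonempty open interval contained in $]x,y[$ and $\sup\{d(s,t): s,t\in\,]u,v[\}<\varepsilon$. Then $K$ is almost totally disconnected.
   Context: Here $]x,y[=\{z\in K: x<z<y\}$. For a set $\Gamma$, $\Sigma_0^1[0,1]^\Gamma$ is the subspace of $[0,1]^\Gamma$ (product topology) consisting of those $x$ with $x_\gamma\in\{0,1\}$ for all but countably many $\gamma$. A compact space is almost totally disconnected if it is homeomorphic to a subspace of $\Sigma_0^1[0,1]^\Gamma$ for some set $\Gamma$. *)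

theory Defs
  imports "HOL-Analysis.Analysis"
begin

definition Sigma01 :: "'g set \<Rightarrow> ('g \<Rightarrow> real) set" where
  "Sigma01 \<Gamma> = {x \<in> PiE \<Gamma> (\<lambda>_. {0..1}). countable {\<gamma> \<in> \<Gamma>. x \<gamma> \<notin> {0, 1}}}"

definition cube_top :: "'g set \<Rightarrow> ('g \<Rightarrow> real) topology" where
  "cube_top \<Gamma> = product_topology (\<lambda>_. top_of_set {0..1}) \<Gamma>"

text \<open>Index sets \<open>\<Gamma>\<close> are taken as subsets of the type \<open>'a \<Rightarrow> real\<close>.\<close>
definition almost_totally_disconnected :: "'a topology \<Rightarrow> bool" where
  "almost_totally_disconnected X \<longleftrightarrow>
     (\<exists>(\<Gamma> :: ('a \<Rightarrow> real) set) T. T \<subseteq> Sigma01 \<Gamma> \<and>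
        X homeomorphic_space subtopology (cube_top \<Gamma>) T)"

end

theory Submission
  imports Defs
begin

lemma subsingleton_countable: "(\<And>p q. p \<in> A \<Longrightarrow> q \<in> A \<Longrightarrow> p = q) \<Longrightarrow> countable A"
proof (cases "A = {}")
  case False
  assume h: "\<And>p q. p \<in> A \<Longrightarrow> q \<in> A \<Longrightarrow> p = q"
  then obtain a where "a \<in> A" using False by blast
  then have "A = {a}" using h by blast
  then show ?thesis by simp
qed simp

lemma maximal_disjoint:
  fixes Sm :: "'b set" and I :: "'b \<Rightarrow> 'c set"
  shows "\<exists>S. S \<subseteq> Sm \<and> pairwise (\<lambda>p q. disjnt (I p) (I q)) S \<and>
     (\<forall>q\<in>Sm. q \<notin> S \<longrightarrow> (\<exists>p\<in>S. \<not> disjnt (I p) (I q)))"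
proof -
  define A where "A = {S. S \<subseteq> Sm \<and> pairwise (\<lambda>p q. disjnt (I p) (I q)) S}"
  have "\<forall>C\<in>chains A. \<Union>C \<in> A"
  proof
    fix C assume C: "C \<in> chains A"
    then have "chain\<^sub>\<subseteq> C" "C \<subseteq> A" by (auto simp: chains_def)
    then show "\<Union>C \<in> A"
      unfolding A_def using pairwise_chain_Union[of C "\<lambda>p q. disjnt (I p) (I q)"]
      by (auto simp: A_def)
  qed
  then obtain M where M: "M \<in> A" "\<forall>X\<in>A. M \<subseteq> X \<longrightarrow> X = M"
    using Zorn_Lemma by blast
  have "\<exists>p\<in>M. \<not> disjnt (I p) (I q)" if q: "q \<in> Sm" "q \<notin> M" for q
  proof (rule ccontr)
    assume "\<not> ?thesis"
    then have "\<forall>p\<in>M. disjnt (I p) (I q)" by blast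
    then have "insert q M \<in> A" using M(1) q unfolding A_def
      by (auto simp: pairwise_insert disjnt_sym)
    then show False using M(2) q(2) by blast
  qed
  then show ?thesis using M(1) unfolding A_def by blast
qed

theorem mainTheorem8:
  fixes d :: "'a::linorder_topology \<Rightarrow> 'a \<Rightarrow> real"
  assumes "compact (UNIV :: 'a set)"
    and "\<And>x y. d x y \<ge> 0"
    and "\<And>x y. d x y = d y x"
    and "\<And>x y. x \<noteq> y \<Longrightarrow> d x y > 0"
    and "\<And>x y \<epsilon>. x < y \<Longrightarrow> {x<..<y} \<noteq> {} \<Longrightarrow> \<epsilon> > 0 \<Longrightarrow>
           \<exists>u v. u < v \<and> {u<..<v} \<noteq> {} \<and> {u<..<v} \<subseteq> {x<..<y} \<and>
             (\<exists>c < \<epsilon>. \<forall>s\<in>{u<..<v}. \<forall>t\<in>{u<..<v}. d s t \<le> c)"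
  shows "almost_totally_disconnected (euclidean :: 'a topology)"
proof -
  define Iv :: "'a \<times> 'a \<Rightarrow> 'a set" where "Iv p = {fst p<..<snd p}" for p
  define Sm where "Sm n = {(u,v). u<v \<and> {u<..<v} \<noteq> {} \<and>
     (\<exists>c < inverse (real (Suc n)). \<forall>s\<in>{u<..<v}. \<forall>t\<in>{u<..<v}. d s t \<le> c)}" for n
  have "\<forall>n. \<exists>S. S \<subseteq> Sm n \<and> pairwise (\<lambda>p q. disjnt (Iv p) (Iv q)) S \<and>
     (\<forall>q\<in>Sm n. q \<notin> S \<longrightarrow> (\<exists>p\<in>S. \<not> disjnt (Iv p) (Iv q)))"
    using maximal_disjoint by blast
  then obtain S where S: "\<And>n. S n \<subseteq> Sm n" "\<And>n. pairwise (\<lambda>p q. disjnt (Iv p) (Iv q)) (S n)"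
    "\<And>n q. q\<in>Sm n \<Longrightarrow> q \<notin> S n \<Longrightarrow> (\<exists>p\<in>S n. \<not> disjnt (Iv p) (Iv q))"
    by metis
  define P where "P = {(u,v). u<v \<and> {u<..<v} = {}} \<union> (\<Union>n. S n)"
  have Plt: "fst p < snd p" if "p \<in> P" for p
  proof -
    obtain a b where ab: "p = (a,b)" by force
    show ?thesis
    proof (cases "p \<in> (\<Union>n. S n)")
      case True
      then obtain n where "(a,b) \<in> Sm n" using S(1) ab by blast
      then show ?thesis using ab by (simp add: Sm_def)
    next
      case False
      then show ?thesis using that ab by (simp add: P_def)
    qed
  qed
  have cs: "compact_space (euclidean :: 'a topology)"
    using assms(1) by (simp add: compact_space_def)
  have hs: "Hausdorff_space (euclidean :: 'a topology)"
    unfolding Hausdorff_space_def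
    by (metis disjnt_def hausdorff open_openin topspace_euclidean UNIV_I)
  have ns: "normal_space (euclidean :: 'a topology)"
    using cs hs compact_Hausdorff_or_regular_imp_normal_space by blast
  have "\<exists>f. continuous_map euclidean (top_of_set {0..1}) f \<and> (\<forall>z. z \<le> u \<longrightarrow> f z = 0) \<and>
      (\<forall>z. v \<le> z \<longrightarrow> f z = (1::real))" if "u < v" for u v :: 'a
  proof -
    have "disjnt {..u} {v..}" using that by (auto simp: disjnt_def)
    then obtain f where "continuous_map euclidean (top_of_set {0..1::real}) f"
       "f ` {..u} \<subseteq> {0}" "f ` {v..} \<subseteq> {1}"
      using Urysohn_lemma[OF ns, of "{..u}" "{v..}" 0 1] by auto
    then show ?thesis by auto
  qed
  note ex = this
  define F where "F u v = (SOME f. continuous_map euclidean (top_of_set {0..1}) f \<and> (\<forall>z. z \<le> u \<longrightarrow> f z = 0) \<and>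
      (\<forall>z. v \<le> z \<longrightarrow> f z = (1::real)))" for u v :: 'a
  have F: "continuous_map euclidean (top_of_set {0..1}) (F u v) \<and>
     (\<forall>z. z \<le> u \<longrightarrow> F u v z = 0) \<and> (\<forall>z. v \<le> z \<longrightarrow> F u v z = (1::real))"
    if uv: "u < v" for u v :: 'a
    unfolding F_def using someI_ex[OF ex[OF uv]] by simp
  define G where "G p = F (fst p) (snd p)" for p
  define \<Gamma> where "\<Gamma> = G ` P"
  define e where "e x = restrict (\<lambda>f. f x) \<Gamma>" for x :: 'a
  have Gcont: "continuous_map euclidean (top_of_set {0..1}) (G p)" if "p \<in> P" for p
    using F[OF Plt[OF that]] by (simp add: G_def)
  have G0: "G p z = 0" if "p \<in> P" "z \<le> fst p" for p z
    using F[OF Plt[OF that(1)]] that(2) by (simp add: G_def)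
  have G1: "G p z = 1" if "p \<in> P" "snd p \<le> z" for p z
    using F[OF Plt[OF that(1)]] that(2) by (simp add: G_def)
  have Grange: "G p z \<in> {0..1}" if "p \<in> P" for p z
    using Gcont[OF that] by (auto simp: continuous_map_def)
  have sep: "\<exists>p\<in>P. G p x \<noteq> G p y" if xy: "x < y" for x y
  proof -
    have jump: ?thesis if "x \<le> a" "a < b" "b \<le> y" "{a<..<b} = {}" for a b
    proof -
      have "(a,b) \<in> P" using that by (auto simp: P_def)
      then show ?thesis using G0[of "(a,b)" x] G1[of "(a,b)" y] that by force
    qed
    have main: ?thesis if pq: "x < p" "p < q" "q < y" "{p<..<q} \<noteq> {}" for p q
    proof -
      have "0 < min (d x p) (d q y)" using assms(4) pq by auto
      then obtain n where n: "inverse (real (Suc n)) < min (d x p) (d q y)"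
        using reals_Archimedean by blast
      obtain u' v' c where uv': "u' < v'" "{u'<..<v'} \<noteq> {}" "{u'<..<v'} \<subseteq> {p<..<q}"
        "c < inverse (real (Suc n))" "\<forall>s\<in>{u'<..<v'}. \<forall>t\<in>{u'<..<v'}. d s t \<le> c"
        using assms(5)[OF pq(2) pq(4), of "inverse (real (Suc n))"] by auto
      have q': "(u',v') \<in> Sm n" using uv' unfolding Sm_def by auto
      obtain w where w: "w \<in> S n" "\<not> disjnt (Iv w) {u'<..<v'}"
      proof (cases "(u',v') \<in> S n")
        case True
        then show ?thesis using that[of "(u',v')"] uv'(2) by (auto simp: Iv_def disjnt_def)
      next
        case False
        then show ?thesis using S(3)[OF q'] that by (auto simp: Iv_def)
      qed
      obtain r where r: "r \<in> Iv w" "p < r" "r < q" using w(2) uv'(3) by (auto simp: disjnt_def) (meson greaterThanLessThan_iff subsetD)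
      obtain u v where wuv: "w = (u,v)" by force
      have wSm: "(u,v) \<in> Sm n" using w(1) S(1) wuv by auto
      then obtain c' where c': "c' < inverse (real (Suc n))"
        "\<forall>s\<in>{u<..<v}. \<forall>t\<in>{u<..<v}. d s t \<le> c'"
        unfolding Sm_def by auto
      have ruv: "u < r" "r < v" using r(1) wuv by (auto simp: Iv_def)
      have xu: "x \<le> u"
      proof (rule ccontr)
        assume "\<not> x \<le> u"
        then have "x \<in> {u<..<v}" "p \<in> {u<..<v}" using ruv r pq by auto
        then have "d x p \<le> c'" using c' by blast
        then show False using c'(1) n by linarith
      qed
      have vy: "v \<le> y"
      proof (rule ccontr)
        assume "\<not> v \<le> y"
        then have "y \<in> {u<..<v}" "q \<in> {u<..<v}" using ruv r pq by auto
        then have "d q y \<le> c'" using c' by blast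
        then show False using c'(1) n by linarith
      qed
      have wP: "(u,v) \<in> P" using w(1) wuv by (auto simp: P_def)
      show ?thesis using G0[OF wP, of x] G1[OF wP, of y] xu vy wP by force
    qed
    show ?thesis
    proof (cases "{x<..<y} = {}")
      case True then show ?thesis using jump[of x y] xy by auto
    next
      case False
      then obtain p where p: "x < p" "p < y" by auto
      show ?thesis
      proof (cases "{p<..<y} = {}")
        case True then show ?thesis using jump[of p y] p by auto
      next
        case False
        then obtain q where q: "p < q" "q < y" by auto
        show ?thesis
        proof (cases "{p<..<q} = {}")
          case True then show ?thesis using jump[of p q] p q by auto
        next
          case False then show ?thesis using main[of p q] p q by auto
        qed
      qed
    qed
  qed
  have cnt: "countable {f \<in> \<Gamma>. e x f \<notin> {0, 1}}" for x
  proof -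
    have sub: "{f \<in> \<Gamma>. e x f \<notin> {0, 1}} \<subseteq> G ` (\<Union>n. {p \<in> S n. x \<in> Iv p})"
    proof
      fix f assume f: "f \<in> {f \<in> \<Gamma>. e x f \<notin> {0, 1}}"
      then obtain p where p: "p \<in> P" "f = G p" by (auto simp: \<Gamma>_def)
      have "G p x \<notin> {0,1}" using f p by (auto simp: e_def)
      then have "\<not> x \<le> fst p" "\<not> snd p \<le> x" using G0[OF p(1)] G1[OF p(1)] by auto
      then have xi: "x \<in> Iv p" by (auto simp: Iv_def)
      then have "p \<in> (\<Union>n. S n)" using p(1) by (auto simp: P_def Iv_def)
      then show "f \<in> G ` (\<Union>n. {p \<in> S n. x \<in> Iv p})" using xi p(2) by blast
    qed
    have "countable {p \<in> S n. x \<in> Iv p}" for n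
    proof (rule subsingleton_countable)
      fix p q assume "p \<in> {p \<in> S n. x \<in> Iv p}" "q \<in> {p \<in> S n. x \<in> Iv p}"
      then show "p = q" using S(2)[of n] unfolding pairwise_def disjnt_def by blast
    qed
    then show ?thesis by (intro countable_subset[OF sub] countable_image countable_UN) auto
  qed
  have cont: "continuous_map euclidean (cube_top \<Gamma>) e"
    unfolding cube_top_def continuous_map_componentwise
  proof
    show "e ` topspace euclidean \<subseteq> extensional \<Gamma>" by (auto simp: e_def)
    show "\<forall>k\<in>\<Gamma>. continuous_map euclidean (top_of_set {0..1}) (\<lambda>x. e x k)"
    proof
      fix k assume k: "k \<in> \<Gamma>"
      then obtain p where "p \<in> P" "k = G p" by (auto simp: \<Gamma>_def)
      moreover have "(\<lambda>x. e x k) = k" using k by (auto simp: e_def)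
      ultimately show "continuous_map euclidean (top_of_set {0..1}) (\<lambda>x. e x k)"
        using Gcont by simp
    qed
  qed
  have hc: "Hausdorff_space (cube_top \<Gamma>)"
    unfolding cube_top_def Hausdorff_space_product_topology
    by (simp add: Hausdorff_space_subtopology)
  have inj: "inj_on e (topspace euclidean)"
  proof (rule inj_onI)
    have aux: False if xy: "x < y" and exy: "e x = e y" for x y
    proof -
      obtain p where "p \<in> P" "G p x \<noteq> G p y" using sep[OF xy] by blast
      moreover have "G p \<in> \<Gamma>" using \<open>p \<in> P\<close> by (simp add: \<Gamma>_def)
      ultimately show False using exy unfolding e_def by (metis restrict_apply')
    qed
    fix x y assume "e x = e y"
    then show "x = y" using aux[of x y] aux[of y x] by (metis linorder_neqE)
  qed
  have emb: "embedding_map euclidean (cube_top \<Gamma>) e"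
    using continuous_imp_embedding_map[OF cont cs hc inj] .
  have "e ` UNIV \<subseteq> Sigma01 \<Gamma>"
  proof
    fix z assume "z \<in> e ` UNIV"
    then obtain x where x: "z = e x" by blast
    have "e x \<in> PiE \<Gamma> (\<lambda>_. {0..1})"
      using Grange by (auto simp: e_def \<Gamma>_def)
    then show "z \<in> Sigma01 \<Gamma>" using cnt[of x] x by (simp add: Sigma01_def)
  qed
  moreover have "(euclidean :: 'a topology) homeomorphic_space subtopology (cube_top \<Gamma>) (e ` UNIV)"
    using embedding_map_imp_homeomorphic_space[OF emb] by simp
  ultimately show ?thesis unfolding almost_totally_disconnected_def by blast
qed

end
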